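(* Let $n\ge5$. (a) Let $Y=Y^{(n)}=(Y_{n+1},Y_n,\ldots,Y_1)$ be a $\{0,1\}$-valued Markov chain (run in the order $Y_{n+1},\ldots,Y_1$) with $Y_{n+1}=1$, transition probabilities $\mathbb{P}(Y_i=0\mid Y_{i+1}=0)=p_i$, $\mathbb{P}(Y_i=1\mid Y_{i+1}=0)=q_i=1-p_i$, $\mathbb{P}(Y_i=0\mid Y_{i+1}=1)=1$ for $i=3,\ldots,n$, where $p_i\in(0,1)$, and with $Y_2=0$, $Y_1=1$ almost surely; set $p_2:=1$. Assume $\frac{p_iq_{i-1}}{p_{i-2}q_i}>1$ for every $4\le i\le n-1$. Then, writing $Y$ also for $(Y_n,\ldots,Y_1)$, $$\mathbb{P}(Y\in\Lambda_2(n))>\mathbb{P}(Y\in\Lambda_1(n)).$$ (b) Let $\theta>0$ and let $\eta=(\eta_n,\ldots,\eta_1)$ have the law of $(\xi_n,\ldots,\xi_1)$ conditioned on $(\xi_n,\ldots,\xi_1)\in\Delta_n$. Then $\mathbb{P}(\eta\in\Lambda_2(n))>\mathbb{P}(\eta\in\Lambda_1(n))$, and $$\mathbb{P}(\eta\in\Lambda_2(n))=\sum_{r\in\Lambda_1(n)}\left(\prod_{i=1}^{|r|-1}\frac{\sigma_i(r)-1}{n+1-\sigma_i(r)}\right)\mathbb{P}(\eta=r).$$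
   Context: Let $\xi_1,\xi_2,\ldots$ be independent Bernoulli random variables with $\mathbb{P}(\xi_i=1)=\theta/(\theta+i-1)$, $\mathbb{P}(\xi_i=0)=(i-1)/(\theta+i-1)$. For $n\ge2$, $\Delta_n$ is the set of $(a_n,a_{n-1},\ldots,a_1)\in\{0,1\}^n$ with $a_n=0$, $a_1=1$, and no index $2\le i\le n$ with $a_i=a_{i-1}=1$. For $r=(r_n,\ldots,r_1)\in\Delta_n$, $|r|$ denotes the number of indices $i$ with $r_i=1$. Set $\sigma_0(r)=n+1$, and for $j=1,\ldots,|r|$ let $\sigma_j(r)$ be the largest index $i<\sigma_{j-1}(r)$ with $r_i=1$ (so $\sigma_{|r|}(r)=1$). The numbers $\sigma_{l-1}(r)-\sigma_l(r)$, $l=1,\ldots,|r|$, are the successive spacings (cycle lengths). $r\in\Delta_n$ is weakly increasing if $\sigma_{l-1}(r)-\sigma_l(r)\le\sigma_l(r)-\sigma_{l+1}(r)$ for all $l=1,\ldots,|r|-1$, and weakly decreasing if $\sigma_{l-1}(r)-\sigma_l(r)\ge\sigma_l(r)-\sigma_{l+1}(r)$ for all such $l$. $\Lambda_1(n)$ (resp. $\Lambda_2(n)$) is the set of weakly increasing (resp. weakly decreasing) elements of $\Delta_n$. *)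

theory Defs
  imports "HOL-Probability.Probability"
begin

text \<open>A 0/1 vector (r_n,...,r_1) is represented by r :: nat => bool with r i = True iff r_i = 1,
  and r i = False for i outside {1..n}.\<close>

definition Delta :: "nat \<Rightarrow> (nat \<Rightarrow> bool) set" where
  "Delta n = {r. (\<forall>i. r i \<longrightarrow> i \<in> {1..n}) \<and> \<not> r n \<and> r 1 \<and>
                 (\<forall>i\<in>{2..n}. \<not> (r i \<and> r (i - 1)))}"

definition ones :: "nat \<Rightarrow> (nat \<Rightarrow> bool) \<Rightarrow> nat" where
  "ones n r = card {i \<in> {1..n}. r i}"

primrec sigma :: "nat \<Rightarrow> (nat \<Rightarrow> bool) \<Rightarrow> nat \<Rightarrow> nat" where
  "sigma n r 0 = n + 1"
| "sigma n r (Suc j) = Max {i \<in> {1..<sigma n r j}. r i}"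

definition Lambda1 :: "nat \<Rightarrow> (nat \<Rightarrow> bool) set" where
  "Lambda1 n = {r \<in> Delta n. \<forall>l \<in> {1..ones n r - 1}.
      sigma n r (l - 1) - sigma n r l \<le> sigma n r l - sigma n r (l + 1)}"

definition Lambda2 :: "nat \<Rightarrow> (nat \<Rightarrow> bool) set" where
  "Lambda2 n = {r \<in> Delta n. \<forall>l \<in> {1..ones n r - 1}.
      sigma n r (l - 1) - sigma n r l \<ge> sigma n r l - sigma n r (l + 1)}"

text \<open>Markov chain of part (a).  ychain p m s is the law of (Y_(m+2),...,Y_1) given Y_(m+3) = s:
  from state 1 the next value is 0; from state 0 the next value is 0 w.p. p_i, 1 w.p. q_i = 1 - p_i
  (i = 3..n); finally Y_2 = 0, Y_1 = 1 almost surely.\<close>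
primrec ychain :: "(nat \<Rightarrow> real) \<Rightarrow> nat \<Rightarrow> bool \<Rightarrow> (nat \<Rightarrow> bool) pmf" where
  "ychain p 0 s = return_pmf (\<lambda>i. i = 1)"
| "ychain p (Suc m) s =
     bind_pmf (if s then return_pmf False else bernoulli_pmf (1 - p (m + 3)))
       (\<lambda>b. map_pmf (\<lambda>rest. rest(m + 3 := b)) (ychain p m b))"

definition Ylaw :: "(nat \<Rightarrow> real) \<Rightarrow> nat \<Rightarrow> (nat \<Rightarrow> bool) pmf" where
  "Ylaw p n = ychain p (n - 2) True"

definition xilaw :: "real \<Rightarrow> nat \<Rightarrow> (nat \<Rightarrow> bool) pmf" where
  "xilaw \<theta> n = Pi_pmf {1..n} False (\<lambda>i. bernoulli_pmf (\<theta> / (\<theta> + real i - 1)))"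

definition etalaw :: "real \<Rightarrow> nat \<Rightarrow> (nat \<Rightarrow> bool) pmf" where
  "etalaw \<theta> n = cond_pmf (xilaw \<theta> n) (Delta n)"

end

theory Submission
  imports Defs
begin


definition tr :: "real \<Rightarrow> bool \<Rightarrow> bool \<Rightarrow> real" where
  "tr q a b = (if a then (if b then 0 else 1) else (if b then 1 - q else q))"

lemma pmf_map_upd:
  "pmf (map_pmf (\<lambda>x. x(k:=b)) M) r =
     (if r k = b then pmf M (r(k:=False)) + pmf M (r(k:=True)) else 0)"
proof -
  have pre: "(\<lambda>x. x(k:=b)) -` {r} = (if r k = b then {r(k:=False), r(k:=True)} else {})"
  proof (cases "r k = b")
    case True
    show ?thesis using True
      by (auto simp: fun_eq_iff split: if_splits)
  next
    case False
    then show ?thesis by (auto simp: fun_eq_iff)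
  qed
  have ne: "r(k:=False) \<noteq> r(k:=True)" by (auto simp: fun_eq_iff)
  show ?thesis
    unfolding pmf_map pre using ne
    by (auto simp: measure_measure_pmf_finite)
qed

lemma ychain_pmf:
  assumes "\<forall>i\<in>{3..m+2}. 0 \<le> p i \<and> p i \<le> 1"
  shows "pmf (ychain p m s) r =
     (if (\<forall>i. r i \<longrightarrow> i \<in> {1..m+2}) \<and> r 1 \<and> \<not> r 2
      then \<Prod>i\<in>{3..m+2}. tr (p i) (if i = m+2 then s else r (i+1)) (r i) else 0)"
  using assms
proof (induction m arbitrary: s r)
  case 0
  have "(r = (\<lambda>i. i = 1)) = ((\<forall>i. r i \<longrightarrow> i \<in> {1..2}) \<and> r 1 \<and> \<not> r 2)"
  proof
    assume H: "(\<forall>i. r i \<longrightarrow> i \<in> {1..2}) \<and> r 1 \<and> \<not> r 2"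
    show "r = (\<lambda>i. i = 1)"
    proof (rule ext)
      fix i show "r i = (i = 1)" using H by (cases "i = 1"; cases "i = 2") auto
    qed
  qed auto
  then show ?case by (auto simp: indicator_def)
next
  case (Suc m)
  let ?k = "m + 3"
  have IH: "\<And>s r. pmf (ychain p m s) r =
     (if (\<forall>i. r i \<longrightarrow> i \<in> {1..m+2}) \<and> r 1 \<and> \<not> r 2
      then \<Prod>i\<in>{3..m+2}. tr (p i) (if i = m+2 then s else r (i+1)) (r i) else 0)"
    using Suc by auto
  have p01: "0 \<le> p ?k" "p ?k \<le> 1" using Suc.prems by auto
  define F where "F = (\<lambda>b. pmf (map_pmf (\<lambda>rest. rest(?k := b)) (ychain p m b)) r)"
  have zero: "pmf (ychain p m b) (r(?k:=True)) = 0" for b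
    by (subst IH) auto
  have F: "F b = (if r ?k = b then pmf (ychain p m b) (r(?k:=False)) else 0)" for b
    unfolding F_def pmf_map_upd using zero by simp
  have cond: "((\<forall>i. (r(?k:=False)) i \<longrightarrow> i \<in> {1..m+2}) \<and> (r(?k:=False)) 1 \<and> \<not> (r(?k:=False)) 2)
     = ((\<forall>i. r i \<longrightarrow> i \<in> {1..Suc m+2}) \<and> r 1 \<and> \<not> r 2)"
  proof -
    have "(\<forall>i. (r(?k:=False)) i \<longrightarrow> i \<in> {1..m+2}) = (\<forall>i. r i \<longrightarrow> i \<in> {1..Suc m+2})"
    proof (intro iffI allI impI)
      fix i assume H: "\<forall>i. (r(?k := False)) i \<longrightarrow> i \<in> {1..m+2}" and ri: "r i"
      show "i \<in> {1..Suc m+2}" using H[rule_format, of i] ri by (cases "i = ?k") auto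
    next
      fix i assume H: "\<forall>i. r i \<longrightarrow> i \<in> {1..Suc m+2}" and ri: "(r(?k := False)) i"
      have "i \<noteq> ?k" using ri by auto
      then show "i \<in> {1..m+2}" using H[rule_format, of i] ri by auto
    qed
    then show ?thesis by simp
  qed
  have prodeq: "(\<Prod>i\<in>{3..m+2}. tr (p i) (if i = m+2 then r ?k else (r(?k:=False)) (i+1)) ((r(?k:=False)) i))
      = (\<Prod>i\<in>{3..m+2}. tr (p i) (r (i+1)) (r i))"
    by (rule prod.cong) (auto simp: numeral_3_eq_3)
  have split: "(\<Prod>i\<in>{3..Suc m+2}. tr (p i) (if i = Suc m+2 then s else r (i+1)) (r i))
     = tr (p ?k) s (r ?k) * (\<Prod>i\<in>{3..m+2}. tr (p i) (r (i+1)) (r i))"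
  proof -
    have "{3..Suc m+2} = insert ?k {3..m+2}" by auto
    then have "(\<Prod>i\<in>{3..Suc m+2}. tr (p i) (if i = Suc m+2 then s else r (i+1)) (r i))
       = tr (p ?k) s (r ?k) * (\<Prod>i\<in>{3..m+2}. tr (p i) (if i = Suc m+2 then s else r (i+1)) (r i))"
      by simp
    also have "(\<Prod>i\<in>{3..m+2}. tr (p i) (if i = Suc m+2 then s else r (i+1)) (r i))
       = (\<Prod>i\<in>{3..m+2}. tr (p i) (r (i+1)) (r i))"
      by (rule prod.cong) auto
    finally show ?thesis .
  qed
  have Fb: "F (r ?k) = (if (\<forall>i. r i \<longrightarrow> i \<in> {1..Suc m+2}) \<and> r 1 \<and> \<not> r 2
      then \<Prod>i\<in>{3..m+2}. tr (p i) (r (i+1)) (r i) else 0)"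
    unfolding F IH[of "r ?k" "r(?k:=False)"] cond prodeq by simp
  have main: "pmf (ychain p (Suc m) s) r = (if s then F False else F True * (1 - p ?k) + F False * p ?k)"
    using p01 by (simp add: F_def pmf_bind)
  show ?case
    unfolding main split
    using p01 Fb F
    by (cases s; cases "r ?k") (auto simp: tr_def)
qed



lemma Delta_D:
  assumes "r \<in> Delta n"
  shows "\<And>i. r i \<Longrightarrow> 1 \<le> i \<and> i \<le> n" "\<not> r n" "r 1"
    "\<And>i. 2 \<le> i \<Longrightarrow> i \<le> n \<Longrightarrow> r i \<Longrightarrow> \<not> r (i - 1)"
  using assms by (auto simp: Delta_def)

lemma Delta_n: assumes "r \<in> Delta n" shows "n \<ge> 2"
  using Delta_D(1)[OF assms, of 1] Delta_D(2,3)[OF assms] by (cases "n = 1") auto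

lemma Delta_2: assumes "r \<in> Delta n" shows "\<not> r 2"
  using Delta_D(3)[OF assms] Delta_D(4)[OF assms, of 2] Delta_D(1)[OF assms, of 2] by auto

lemma sigma_inv:
  assumes D: "r \<in> Delta n" and j: "j \<le> ones n r"
  shows "card {i\<in>{1..n}. r i \<and> i < sigma n r j} = ones n r - j \<and>
         (j \<ge> 1 \<longrightarrow> r (sigma n r j) \<and> sigma n r j \<in> {1..n}) \<and> sigma n r j \<le> n+1"
  using j
proof (induction j)
  case 0
  have "{i\<in>{1..n}. r i \<and> i < n+1} = {i\<in>{1..n}. r i}" by auto
  then show ?case by (simp add: ones_def)
next
  case (Suc j)
  define A where "A = {i\<in>{1..n}. r i \<and> i < sigma n r j}"
  have IH: "card A = ones n r - j" "sigma n r j \<le> n+1" using Suc by (auto simp: A_def)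
  have fA: "finite A" by (simp add: A_def)
  have "card A > 0" using IH Suc.prems by simp
  then have ne: "A \<noteq> {}" by auto
  have eq: "{i \<in> {1..<sigma n r j}. r i} = A"
    using IH(2) Delta_D(1)[OF D] by (auto simp: A_def)
  have s: "sigma n r (Suc j) = Max A" by (simp only: sigma.simps(2) eq)
  have MA: "Max A \<in> A" using fA ne by simp
  have le: "\<And>i. i \<in> A \<Longrightarrow> i \<le> Max A" using fA by simp
  have MA': "r (Max A)" "Max A \<in> {1..n}" "Max A < sigma n r j" using MA unfolding A_def by auto
  have eq2: "{i\<in>{1..n}. r i \<and> i < Max A} = A - {Max A}"
  proof (intro set_eqI iffI)
    fix i assume "i \<in> {i\<in>{1..n}. r i \<and> i < Max A}"
    then show "i \<in> A - {Max A}" using MA'(3) unfolding A_def by auto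
  next
    fix i assume "i \<in> A - {Max A}"
    then have iA: "i \<in> A" and "i \<noteq> Max A" by auto
    then have "i < Max A" using le[of i] by auto
    then show "i \<in> {i\<in>{1..n}. r i \<and> i < Max A}" using iA by (simp add: A_def)
  qed
  have "card (A - {Max A}) = ones n r - Suc j" using MA fA IH(1) by (simp add: card_Diff_singleton)
  then show ?case unfolding s eq2 using MA' by auto
qed

lemma sigma_step:
  assumes D: "r \<in> Delta n" and j: "j < ones n r"
  shows "sigma n r (Suc j) < sigma n r j" "r (sigma n r (Suc j))"
    "\<And>i. r i \<Longrightarrow> i < sigma n r j \<Longrightarrow> i \<le> sigma n r (Suc j)"
proof -
  define A where "A = {i\<in>{1..n}. r i \<and> i < sigma n r j}"
  have IH: "card A = ones n r - j" "sigma n r j \<le> n+1" using sigma_inv[OF D, of j] j by (auto simp: A_def)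
  have fA: "finite A" by (simp add: A_def)
  have "card A > 0" using IH j by simp
  then have ne: "A \<noteq> {}" by auto
  have eq: "{i \<in> {1..<sigma n r j}. r i} = A"
    using IH(2) Delta_D(1)[OF D] by (auto simp: A_def)
  have s: "sigma n r (Suc j) = Max A" by (simp only: sigma.simps(2) eq)
  have MA: "Max A \<in> A" using fA ne by simp
  show "sigma n r (Suc j) < sigma n r j" "r (sigma n r (Suc j))" using MA s by (auto simp: A_def)
  show "\<And>i. r i \<Longrightarrow> i < sigma n r j \<Longrightarrow> i \<le> sigma n r (Suc j)"
  proof -
    fix i assume "r i" "i < sigma n r j"
    then have "i \<in> A" using Delta_D(1)[OF D, of i] by (simp add: A_def)
    then show "i \<le> sigma n r (Suc j)" unfolding s using fA by simp
  qed
qed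

lemma ones_pos: assumes D: "r \<in> Delta n" shows "ones n r \<ge> 1"
proof -
  have "1 \<in> {i\<in>{1..n}. r i}" using Delta_D(1)[OF D,of 1] Delta_D(3)[OF D] by auto
  then have "card {i\<in>{1..n}. r i} > 0" by (auto simp: card_gt_0_iff)
  then show ?thesis by (simp add: ones_def)
qed

lemma sigma_mem:
  assumes D: "r \<in> Delta n" and "1 \<le> j" "j \<le> ones n r"
  shows "r (sigma n r j)" "sigma n r j \<in> {1..n}"
  using sigma_inv[OF D, of j] assms by auto

lemma sigma_le: "r \<in> Delta n \<Longrightarrow> j \<le> ones n r \<Longrightarrow> sigma n r j \<le> n + 1"
  using sigma_inv by blast

lemma sigma_last:
  assumes D: "r \<in> Delta n"
  shows "sigma n r (ones n r) = 1"
proof -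
  let ?k = "ones n r"
  have c: "card {i\<in>{1..n}. r i \<and> i < sigma n r ?k} = 0" using sigma_inv[OF D, of ?k] by simp
  have m: "sigma n r ?k \<in> {1..n}" using sigma_mem[OF D, of ?k] ones_pos[OF D] by auto
  have "\<not> (1 < sigma n r ?k)"
  proof
    assume "1 < sigma n r ?k"
    then have "1 \<in> {i\<in>{1..n}. r i \<and> i < sigma n r ?k}" using Delta_D[OF D] Delta_n[OF D] by auto
    moreover have "finite {i\<in>{1..n}. r i \<and> i < sigma n r ?k}" by simp
    ultimately show False using c by (metis card_0_eq empty_iff)
  qed
  then show ?thesis using m by auto
qed

lemma sigma_mono:
  assumes D: "r \<in> Delta n" and "i < j" "j \<le> ones n r"
  shows "sigma n r j < sigma n r i"
  using assms(2,3)
proof (induction j)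
  case 0 then show ?case by simp
next
  case (Suc j)
  have "sigma n r (Suc j) < sigma n r j" using sigma_step(1)[OF D] Suc.prems by simp
  then show ?case using Suc by (cases "i = j") auto
qed

lemma sigma_inj: assumes D: "r \<in> Delta n" shows "inj_on (sigma n r) {0..ones n r}"
proof (rule inj_onI)
  fix x y assume x: "x \<in> {0..ones n r}" and y: "y \<in> {0..ones n r}" and e: "sigma n r x = sigma n r y"
  show "x = y"
  proof (rule ccontr)
    assume "x \<noteq> y"
    then consider "x < y" | "y < x" by linarith
    then show False
    proof cases
      case 1 then show False using sigma_mono[OF D, of x y] y e by auto
    next
      case 2 then show False using sigma_mono[OF D, of y x] x e by auto
    qed
  qed
qed

lemma sigma_image:
  assumes D: "r \<in> Delta n"
  shows "sigma n r ` {1..ones n r - 1} = {t\<in>{2..n}. r t}"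
proof (rule card_subset_eq)
  show "finite {t\<in>{2..n}. r t}" by simp
  show sub: "sigma n r ` {1..ones n r - 1} \<subseteq> {t\<in>{2..n}. r t}"
  proof
    fix t assume "t \<in> sigma n r ` {1..ones n r - 1}"
    then obtain j where j: "j \<in> {1..ones n r - 1}" "t = sigma n r j" by auto
    have "sigma n r (ones n r) < sigma n r j" using sigma_mono[OF D, of j "ones n r"] j by auto
    then show "t \<in> {t\<in>{2..n}. r t}" using sigma_mem[OF D, of j] j sigma_last[OF D] by auto
  qed
  have "card (sigma n r ` {1..ones n r - 1}) = ones n r - 1"
  proof -
    have "inj_on (sigma n r) {1..ones n r - 1}"
      by (rule inj_on_subset[OF sigma_inj[OF D]]) auto
    then show ?thesis by (simp add: card_image)
  qed
  moreover have "{t\<in>{2..n}. r t} = {t\<in>{1..n}. r t} - {1}"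
  proof (intro set_eqI)
    fix x show "x \<in> {t\<in>{2..n}. r t} \<longleftrightarrow> x \<in> {t\<in>{1..n}. r t} - {1}"
      using Delta_D(1)[OF D, of x] Delta_D(3)[OF D] Delta_n[OF D] by auto
  qed
  then have "card {t\<in>{2..n}. r t} = ones n r - 1" using Delta_D[OF D] Delta_n[OF D]
    by (simp add: ones_def card_Diff_singleton)
  ultimately show "card (sigma n r ` {1..ones n r - 1}) = card {t\<in>{2..n}. r t}" by simp
qed

definition tau :: "nat \<Rightarrow> nat \<Rightarrow> nat" where
  "tau n i = (if i = 1 then 1 else n + 2 - i)"

definition rho :: "nat \<Rightarrow> (nat \<Rightarrow> bool) \<Rightarrow> (nat \<Rightarrow> bool)" where
  "rho n r = (\<lambda>i. i \<in> {1..n} \<and> r (tau n i))"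

lemma rho_Delta:
  assumes D: "r \<in> Delta n"
  shows "rho n r \<in> Delta n"
proof -
  have n2: "n \<ge> 2" using Delta_n[OF D] .
  have a: "\<forall>i. rho n r i \<longrightarrow> i \<in> {1..n}" by (simp add: rho_def)
  have b: "\<not> rho n r n" using n2 Delta_2[OF D] by (simp add: rho_def tau_def)
  have c: "rho n r 1" using n2 Delta_D(3)[OF D] by (simp add: rho_def tau_def)
  have d: "\<not> (rho n r i \<and> rho n r (i - 1))" if i: "i \<in> {2..n}" for i
  proof (cases "i = 2")
    case True
    then show ?thesis using n2 Delta_D(2)[OF D] by (simp add: rho_def tau_def)
  next
    case False
    then have i3: "i \<ge> 3" using i by auto
    have t1: "tau n i = n + 2 - i" using i3 by (simp add: tau_def)
    have "i - 1 \<noteq> 1" "n + 2 - (i - 1) = Suc (n + 2 - i)" using i3 i by auto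
    then have t2: "tau n (i - 1) = Suc (n + 2 - i)" by (simp add: tau_def)
    have "\<not> (r (Suc (n + 2 - i)) \<and> r (n + 2 - i))"
      using Delta_D(4)[OF D, of "Suc (n + 2 - i)"] i i3 by auto
    then show ?thesis unfolding rho_def t1 t2 by auto
  qed
  show ?thesis using a b c d by (auto simp: Delta_def)
qed

lemma tau_in: "n \<ge> 2 \<Longrightarrow> i \<in> {1..n} \<Longrightarrow> tau n i \<in> {1..n}"
  by (auto simp: tau_def)

lemma tau_tau: "n \<ge> 2 \<Longrightarrow> i \<in> {1..n} \<Longrightarrow> tau n (tau n i) = i"
  by (auto simp: tau_def)

lemma rho_rho:
  assumes D: "r \<in> Delta n"
  shows "rho n (rho n r) = r"
proof (rule ext)
  fix i
  have n2: "n \<ge> 2" using Delta_n[OF D] .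
  show "rho n (rho n r) i = r i"
  proof (cases "i \<in> {1..n}")
    case True
    then show ?thesis using tau_in[OF n2 True] tau_tau[OF n2 True] by (simp add: rho_def)
  next
    case False
    then show ?thesis using Delta_D(1)[OF D, of i] by (auto simp: rho_def)
  qed
qed

lemma ones_rho:
  assumes D: "r \<in> Delta n"
  shows "ones n (rho n r) = ones n r"
proof -
  have n2: "n \<ge> 2" using Delta_n[OF D] .
  have inj: "inj_on (tau n) {1..n}"
    by (rule inj_onI) (metis tau_tau[OF n2])
  have eq: "{i\<in>{1..n}. rho n r i} = tau n ` {i\<in>{1..n}. r i}"
  proof (intro set_eqI iffI)
    fix x assume "x \<in> {i\<in>{1..n}. rho n r i}"
    then have x: "x \<in> {1..n}" "r (tau n x)" by (auto simp: rho_def)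
    then show "x \<in> tau n ` {i\<in>{1..n}. r i}"
      using tau_in[OF n2 x(1)] tau_tau[OF n2 x(1)] by (auto intro!: image_eqI[of x _ "tau n x"])
  next
    fix x assume "x \<in> tau n ` {i\<in>{1..n}. r i}"
    then obtain y where y: "y \<in> {1..n}" "r y" "x = tau n y" by auto
    then show "x \<in> {i\<in>{1..n}. rho n r i}"
      using tau_in[OF n2 y(1)] tau_tau[OF n2 y(1)] by (auto simp: rho_def)
  qed
  have "card (tau n ` {i\<in>{1..n}. r i}) = card {i\<in>{1..n}. r i}"
    by (rule card_image) (rule inj_on_subset[OF inj], auto)
  then show ?thesis unfolding ones_def eq by simp
qed

declare sigma.simps(2)[simp del]

lemma sigma_rho:
  assumes D: "r \<in> Delta n" and j: "j \<le> ones n r"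
  shows "sigma n (rho n r) j = n + 2 - sigma n r (ones n r - j)"
  using j
proof (induction j)
  case 0
  then show ?case using sigma_last[OF D] by simp
next
  case (Suc j)
  define k where "k = ones n r"
  define t where "t = k - Suc j"
  have tk: "t < k" and kj: "k - j = Suc t" using Suc.prems by (auto simp: t_def k_def)
  have n2: "n \<ge> 2" using Delta_n[OF D] .
  have IH: "sigma n (rho n r) j = n + 2 - sigma n r (Suc t)" using Suc kj by (simp add: k_def del: sigma.simps(2))
  have st: "sigma n r (Suc t) < sigma n r t" "r (sigma n r (Suc t))"
    "\<And>i. r i \<Longrightarrow> i < sigma n r t \<Longrightarrow> i \<le> sigma n r (Suc t)"
    using sigma_step[OF D, of t] tk by (auto simp: k_def)
  define c where "c = sigma n r t"
  have cle: "c \<le> n + 1" using sigma_le[OF D, of t] tk by (simp add: c_def k_def)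
  have s1: "sigma n r (Suc t) \<ge> 1"
    using sigma_mem[OF D, of "Suc t"] tk by (auto simp: k_def)
  let ?A = "{i \<in> {1..<sigma n (rho n r) j}. rho n r i}"
  have eqS: "sigma n (rho n r) (Suc j) = Max ?A" by (simp only: sigma.simps(2))
  have mem: "n + 2 - c \<in> ?A"
  proof -
    have "rho n r (n + 2 - c)"
    proof (cases "t = 0")
      case True
      then have "c = n + 1" by (simp add: c_def)
      then show ?thesis using Delta_D(3)[OF D] n2 by (simp add: rho_def tau_def)
    next
      case False
      have "r c" "c \<in> {1..n}" using sigma_mem[OF D, of t] False tk by (auto simp: c_def k_def)
      moreover have "c \<ge> 2" using st(1) s1 by (simp add: c_def)
      ultimately have "r c" "n + 2 - c \<noteq> 1" "1 \<le> n + 2 - c" "n + 2 - c \<le> n" "n + 2 - (n + 2 - c) = c"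
        by auto
      then show ?thesis by (simp add: rho_def tau_def)
    qed
    moreover have "n + 2 - c < n + 2 - sigma n r (Suc t)" using st(1) cle by (simp add: c_def)
    moreover have "1 \<le> n + 2 - c" using cle by simp
    ultimately show ?thesis by (simp add: IH)
  qed
  have ub: "y \<le> n + 2 - c" if y: "y \<in> ?A" for y
  proof (cases "y = 1")
    case True then show ?thesis using cle by simp
  next
    case False
    have y0: "y < sigma n (rho n r) j" "rho n r y" using y by auto
    have y1: "y \<in> {1..n}" "r (tau n y)" "y < n + 2 - sigma n r (Suc t)"
      using y0(2) by (auto simp: rho_def) (use y0(1) IH in simp)
    then have y2: "y \<ge> 2" using False by auto
    then have tau: "tau n y = n + 2 - y" by (simp add: tau_def)
    show ?thesis
    proof (rule ccontr)
      assume "\<not> y \<le> n + 2 - c"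
      then have "n + 2 - y < c" using y1 by auto
      then have "n + 2 - y \<le> sigma n r (Suc t)" using st(3)[of "n + 2 - y"] y1 tau by (simp add: c_def)
      then show False using y1 by auto
    qed
  qed
  have "Max ?A = n + 2 - c"
    by (rule Max_eqI) (use mem ub in auto)
  then have "sigma n (rho n r) (Suc j) = n + 2 - c" by (simp only: eqS)
  then show ?case by (simp only: c_def t_def k_def)
qed

lemma sigma_range:
  assumes D: "r \<in> Delta n" and j: "j \<in> {1..ones n r - 1}"
  shows "3 \<le> sigma n r j" "sigma n r j \<le> n - 1"
proof -
  have m: "r (sigma n r j)" "sigma n r j \<in> {1..n}" using sigma_mem[OF D, of j] j by auto
  have "sigma n r (ones n r) < sigma n r j" using sigma_mono[OF D, of j "ones n r"] j by auto
  then have g: "sigma n r j \<ge> 2" using sigma_last[OF D] by simp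
  have "sigma n r j \<noteq> 2" using m Delta_2[OF D] by auto
  then show "3 \<le> sigma n r j" using g by simp
  have "sigma n r j \<noteq> n" using m Delta_D(2)[OF D] by auto
  then show "sigma n r j \<le> n - 1" using m by auto
qed

lemma rho_diffs:
  assumes D: "r \<in> Delta n" and l: "l \<in> {1..ones n r - 1}"
  shows "sigma n (rho n r) (l - 1) - sigma n (rho n r) l
           = sigma n r (ones n r - l) - sigma n r (Suc (ones n r - l))"
    "sigma n (rho n r) l - sigma n (rho n r) (l + 1)
           = sigma n r (ones n r - l - 1) - sigma n r (ones n r - l)"
proof -
  define k where "k = ones n r"
  have l': "1 \<le> l" "l < k" using l by (auto simp: k_def)
  have e1: "sigma n (rho n r) (l - 1) = n + 2 - sigma n r (Suc (k - l))"
    using sigma_rho[OF D, of "l - 1"] l' by (simp add: k_def Suc_diff_le)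
  have e2: "sigma n (rho n r) l = n + 2 - sigma n r (k - l)"
    using sigma_rho[OF D, of l] l' by (simp add: k_def)
  have e3: "sigma n (rho n r) (l + 1) = n + 2 - sigma n r (k - l - 1)"
    using sigma_rho[OF D, of "l + 1"] l' by (simp add: k_def)
  have a1: "sigma n r (Suc (k - l)) < sigma n r (k - l)"
    using sigma_mono[OF D, of "k - l" "Suc (k - l)"] l' by (simp add: k_def)
  have a2: "sigma n r (k - l) < sigma n r (k - l - 1)"
    using sigma_mono[OF D, of "k - l - 1" "k - l"] l' by (simp add: k_def)
  have b: "sigma n r (k - l - 1) \<le> n + 1" using sigma_le[OF D, of "k - l - 1"] by (simp add: k_def)
  show "sigma n (rho n r) (l - 1) - sigma n (rho n r) l
           = sigma n r (ones n r - l) - sigma n r (Suc (ones n r - l))"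
    using e1 e2 a1 a2 b by (simp add: k_def[symmetric])
  show "sigma n (rho n r) l - sigma n (rho n r) (l + 1)
           = sigma n r (ones n r - l - 1) - sigma n r (ones n r - l)"
    using e2 e3 a1 a2 b by (simp add: k_def[symmetric])
qed

lemma ball_flip: "(\<forall>l\<in>{1..(k::nat) - 1}. P (k - l)) \<longleftrightarrow> (\<forall>m\<in>{1..k - 1}. P m)"
proof
  assume H: "\<forall>l\<in>{1..k - 1}. P (k - l)"
  show "\<forall>m\<in>{1..k - 1}. P m"
  proof
    fix m assume m: "m \<in> {1..k - 1}"
    then have "k - m \<in> {1..k - 1}" "k - (k - m) = m" by auto
    then show "P m" using H by metis
  qed
next
  assume H: "\<forall>m\<in>{1..k - 1}. P m"
  show "\<forall>l\<in>{1..k - 1}. P (k - l)"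
  proof
    fix l assume "l \<in> {1..k - 1}"
    then have "k - l \<in> {1..k - 1}" by auto
    then show "P (k - l)" using H by blast
  qed
qed

lemma rho_Lambda:
  assumes D: "r \<in> Delta n"
  shows "rho n r \<in> Lambda2 n \<longleftrightarrow> r \<in> Lambda1 n" "rho n r \<in> Lambda1 n \<longleftrightarrow> r \<in> Lambda2 n"
proof -
  define k where "k = ones n r"
  have ok: "ones n (rho n r) = k" using ones_rho[OF D] by (simp add: k_def)
  have DR: "rho n r \<in> Delta n" using rho_Delta[OF D] .
  let ?s = "sigma n r" and ?s' = "sigma n (rho n r)"
  have c2: "(?s' (l - 1) - ?s' l \<ge> ?s' l - ?s' (l + 1)) \<longleftrightarrow>
            (?s (k - l - 1) - ?s (k - l) \<le> ?s (k - l) - ?s (k - l + 1))" if l: "l \<in> {1..k-1}" for l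
    using rho_diffs[OF D, of l] l by (simp add: k_def)
  have c1: "(?s' (l - 1) - ?s' l \<le> ?s' l - ?s' (l + 1)) \<longleftrightarrow>
            (?s (k - l - 1) - ?s (k - l) \<ge> ?s (k - l) - ?s (k - l + 1))" if l: "l \<in> {1..k-1}" for l
    using rho_diffs[OF D, of l] l by (simp add: k_def)
  have "rho n r \<in> Lambda2 n \<longleftrightarrow> (\<forall>l\<in>{1..k-1}. ?s (k - l - 1) - ?s (k - l) \<le> ?s (k - l) - ?s (k - l + 1))"
    unfolding Lambda2_def using DR ok c2 by auto
  also have "\<dots> \<longleftrightarrow> (\<forall>m\<in>{1..k-1}. ?s (m - 1) - ?s m \<le> ?s m - ?s (m + 1))"
    by (rule ball_flip[where P = "\<lambda>m. ?s (m - 1) - ?s m \<le> ?s m - ?s (m + 1)"])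
  also have "\<dots> \<longleftrightarrow> r \<in> Lambda1 n" unfolding Lambda1_def using D by (simp add: k_def)
  finally show "rho n r \<in> Lambda2 n \<longleftrightarrow> r \<in> Lambda1 n" .
  have "rho n r \<in> Lambda1 n \<longleftrightarrow> (\<forall>l\<in>{1..k-1}. ?s (k - l - 1) - ?s (k - l) \<ge> ?s (k - l) - ?s (k - l + 1))"
    unfolding Lambda1_def using DR ok c1 by auto
  also have "\<dots> \<longleftrightarrow> (\<forall>m\<in>{1..k-1}. ?s (m - 1) - ?s m \<ge> ?s m - ?s (m + 1))"
    by (rule ball_flip[where P = "\<lambda>m. ?s (m - 1) - ?s m \<ge> ?s m - ?s (m + 1)"])
  also have "\<dots> \<longleftrightarrow> r \<in> Lambda2 n" unfolding Lambda2_def using D by (simp add: k_def)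
  finally show "rho n r \<in> Lambda1 n \<longleftrightarrow> r \<in> Lambda2 n" .
qed

lemma Lambda1_D: "r \<in> Lambda1 n \<Longrightarrow> r \<in> Delta n" by (simp add: Lambda1_def)
lemma Lambda2_D: "r \<in> Lambda2 n \<Longrightarrow> r \<in> Delta n" by (simp add: Lambda2_def)

lemma sigma_sum_ge:
  assumes L: "r \<in> Lambda1 n" and j: "j \<le> ones n r"
  shows "n + 2 \<le> sigma n r j + sigma n r (ones n r - j)"
proof -
  have D: "r \<in> Delta n" using L by (simp add: Lambda1_def)
  define k where "k = ones n r"
  let ?s = "sigma n r"
  have L1: "?s (m - 1) - ?s m \<le> ?s m - ?s (m + 1)" if "m \<in> {1..k-1}" for m
    using L that by (simp add: Lambda1_def k_def)
  have dm: "?s (a - 1) - ?s a \<le> ?s (b - 1) - ?s b" if ab: "1 \<le> a" "a \<le> b" "b \<le> k" for a b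
    using ab(2,3)
  proof (induction b rule: dec_induct)
    case base then show ?case by simp
  next
    case (step m)
    have "?s (m - 1) - ?s m \<le> ?s m - ?s (m + 1)" using L1[of m] step ab(1) by auto
    then show ?case using step by simp
  qed
  have half: "2 * i \<le> k \<Longrightarrow> n + 2 \<le> ?s i + ?s (k - i)" for i
  proof (induction i)
    case 0 then show ?case using sigma_last[OF D] by (simp add: k_def)
  next
    case (Suc i)
    have IH: "n + 2 \<le> ?s i + ?s (k - i)" using Suc by simp
    have p: "1 \<le> Suc i" "Suc i \<le> k - i" "k - i \<le> k" "Suc i \<le> ones n r" "k - i \<le> ones n r"
      "k - i - 1 < k - i" using Suc.prems by (auto simp: k_def)
    have d: "?s (Suc i - 1) - ?s (Suc i) \<le> ?s (k - i - 1) - ?s (k - i)"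
      by (rule dm[OF p(1,2,3)])
    have m1: "?s (Suc i) < ?s i" by (rule sigma_mono[OF D _ p(4)]) simp
    have m2: "?s (k - i) < ?s (k - i - 1)" by (rule sigma_mono[OF D p(6) p(5)])
    have e: "k - Suc i = k - i - 1" by simp
    have d': "?s i - ?s (Suc i) \<le> ?s (k - i - 1) - ?s (k - i)" using d by simp
    show ?case unfolding e using IH d' m1 m2 by linarith
  qed
  show ?thesis
  proof (cases "2 * j \<le> k")
    case True then show ?thesis using half by (simp add: k_def)
  next
    case False
    then have "2 * (k - j) \<le> k" "k - (k - j) = j" using j by (auto simp: k_def)
    then show ?thesis using half[of "k - j"] by (simp add: k_def add.commute)
  qed
qed

lemma prod_sigma:
  assumes D: "r \<in> Delta n"
  shows "(\<Prod>j\<in>{1..ones n r - 1}. h (sigma n r j)) = (\<Prod>t\<in>{2..n}. if r t then h t else 1)"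
proof -
  have "(\<Prod>t\<in>{2..n}. if r t then h t else 1) = prod h {t\<in>{2..n}. r t}"
    by (rule prod.inter_filter[symmetric]) simp
  also have "\<dots> = prod h (sigma n r ` {1..ones n r - 1})" using sigma_image[OF D] by simp
  also have "\<dots> = (\<Prod>j\<in>{1..ones n r - 1}. h (sigma n r j))"
  proof -
    have "inj_on (sigma n r) {1..ones n r - 1}"
      by (rule inj_on_subset[OF sigma_inj[OF D]]) auto
    then show ?thesis by (simp add: prod.reindex)
  qed
  finally show ?thesis by simp
qed

lemma prod_rho:
  assumes D: "r \<in> Delta n"
  shows "(\<Prod>t\<in>{2..n}. if rho n r t then g t else 1) = (\<Prod>t\<in>{2..n}. if r t then g (n + 2 - t) else 1)"
proof (rule prod.reindex_bij_witness[where i = "\<lambda>t. n + 2 - t" and j = "\<lambda>t. n + 2 - t"])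
  fix a assume a: "a \<in> {2..n}"
  show "n + 2 - (n + 2 - a) = a" using a by auto
  show "n + 2 - a \<in> {2..n}" using a by auto
next
  fix b assume b: "b \<in> {2..n}"
  show "n + 2 - (n + 2 - b) = b" using b by auto
  show "n + 2 - b \<in> {2..n}" using b by auto
next
  fix a assume a: "a \<in> {2..n}"
  have "rho n r a = r (n + 2 - a)" using a by (auto simp: rho_def tau_def)
  then show "(if r (n + 2 - a) then g (n + 2 - (n + 2 - a)) else 1) = (if rho n r a then g a else 1)"
    using a by auto
qed

lemma compare:
  assumes L: "r \<in> Lambda1 n"
    and gpos: "\<And>t. t \<in> {3..n-1} \<Longrightarrow> 0 \<le> (g t :: real)"
    and gmono: "\<And>x y. 3 \<le> x \<Longrightarrow> x \<le> y \<Longrightarrow> y \<le> n - 1 \<Longrightarrow> g y \<le> g x"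
  shows "(\<Prod>t\<in>{2..n}. if r t then g t else 1) \<le> (\<Prod>t\<in>{2..n}. if r t then g (n + 2 - t) else 1)"
proof -
  have D: "r \<in> Delta n" using L by (simp add: Lambda1_def)
  define k where "k = ones n r"
  let ?s = "sigma n r"
  have "(\<Prod>t\<in>{2..n}. if r t then g t else 1) = (\<Prod>j\<in>{1..k-1}. g (?s j))"
    using prod_sigma[OF D, of g] by (simp add: k_def)
  also have "\<dots> \<le> (\<Prod>j\<in>{1..k-1}. g (n + 2 - ?s (k - j)))"
  proof (rule prod_mono)
    fix j assume j: "j \<in> {1..k-1}"
    have j': "k - j \<in> {1..ones n r - 1}" using j by (auto simp: k_def)
    have r1: "3 \<le> ?s j" "?s j \<le> n - 1" using sigma_range[OF D, of j] j by (auto simp: k_def)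
    have r2: "3 \<le> ?s (k - j)" "?s (k - j) \<le> n - 1" using sigma_range[OF D, of "k - j"] j' by auto
    have jk: "j \<le> ones n r" using j by (auto simp: k_def)
    have ge: "n + 2 \<le> ?s j + ?s (k - j)" using sigma_sum_ge[OF L jk] by (simp add: k_def)
    show "0 \<le> g (?s j) \<and> g (?s j) \<le> g (n + 2 - ?s (k - j))"
      using gpos[of "?s j"] r1 r2 ge gmono[of "n + 2 - ?s (k - j)" "?s j"] by auto
  qed
  also have "\<dots> = (\<Prod>j\<in>{1..k-1}. g (n + 2 - ?s j))"
    by (rule prod.reindex_bij_witness[where i = "\<lambda>j. k - j" and j = "\<lambda>j. k - j"]) auto
  also have "\<dots> = (\<Prod>t\<in>{2..n}. if r t then g (n + 2 - t) else 1)"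
    using prod_sigma[OF D, of "\<lambda>t. g (n + 2 - t)"] by (simp add: k_def)
  finally show ?thesis .
qed



lemma finite_Delta: "finite (Delta n)"
proof (rule finite_subset)
  show "Delta n \<subseteq> (\<lambda>A i. i \<in> A) ` Pow {1..n}"
  proof
    fix r assume r: "r \<in> Delta n"
    have "r = (\<lambda>i. i \<in> {i\<in>{1..n}. r i})" using Delta_D(1)[OF r] by (auto simp: fun_eq_iff)
    then show "r \<in> (\<lambda>A i. i \<in> A) ` Pow {1..n}" by blast
  qed
  show "finite ((\<lambda>A i. i \<in> A) ` Pow {1..n})" by simp
qed

lemma finite_Lambda1: "finite (Lambda1 n)"
  by (rule finite_subset[OF _ finite_Delta]) (auto simp: Lambda1_def)

lemma finite_Lambda2: "finite (Lambda2 n)"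
  by (rule finite_subset[OF _ finite_Delta]) (auto simp: Lambda2_def)

lemma rho_image: "rho n ` Lambda1 n = Lambda2 n"
proof (intro set_eqI iffI)
  fix x assume "x \<in> rho n ` Lambda1 n"
  then obtain r where r: "r \<in> Lambda1 n" "x = rho n r" by auto
  then show "x \<in> Lambda2 n" using rho_Lambda(1)[OF Lambda1_D[OF r(1)]] by simp
next
  fix x assume x: "x \<in> Lambda2 n"
  have D: "x \<in> Delta n" using Lambda2_D[OF x] .
  have "rho n x \<in> Lambda1 n" using rho_Lambda(2)[OF D] x by simp
  moreover have "rho n (rho n x) = x" using rho_rho[OF D] .
  ultimately show "x \<in> rho n ` Lambda1 n" by (metis image_eqI)
qed

lemma rho_inj: "inj_on (rho n) (Lambda1 n)"
  by (rule inj_onI) (metis Lambda1_D rho_rho)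

lemma prob_Lambda2:
  "measure_pmf.prob M (Lambda2 n) = (\<Sum>r\<in>Lambda1 n. pmf M (rho n r))"
proof -
  have "measure_pmf.prob M (Lambda2 n) = sum (pmf M) (Lambda2 n)"
    by (rule measure_measure_pmf_finite[OF finite_Lambda2])
  also have "\<dots> = sum (pmf M) (rho n ` Lambda1 n)" by (simp add: rho_image)
  also have "\<dots> = (\<Sum>r\<in>Lambda1 n. pmf M (rho n r))" by (simp add: sum.reindex[OF rho_inj])
  finally show ?thesis .
qed

definition r0 :: "nat \<Rightarrow> nat \<Rightarrow> bool" where "r0 n = (\<lambda>i. i = 1 \<or> i = n - 1)"

lemma r0_Delta: "n \<ge> 5 \<Longrightarrow> r0 n \<in> Delta n"
  by (auto simp: Delta_def r0_def)

lemma r0_Lambda1: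
  assumes n5: "n \<ge> 5"
  shows "r0 n \<in> Lambda1 n"
proof -
  have D: "r0 n \<in> Delta n" using r0_Delta[OF n5] .
  have S: "{i\<in>{1..n}. r0 n i} = {1, n - 1}" using n5 by (auto simp: r0_def)
  have k: "ones n (r0 n) = 2" unfolding ones_def S using n5 by simp
  have m: "r0 n (sigma n (r0 n) 1)" using sigma_mem[OF D, of 1] k by simp
  have lt: "sigma n (r0 n) 2 < sigma n (r0 n) 1" using sigma_mono[OF D, of 1 2] k by simp
  have s2: "sigma n (r0 n) 2 = 1" using sigma_last[OF D] k by simp
  have s1: "sigma n (r0 n) 1 = n - 1" using m lt s2 by (auto simp: r0_def)
  have "sigma n (r0 n) (1 - 1) - sigma n (r0 n) 1 \<le> sigma n (r0 n) 1 - sigma n (r0 n) (1 + 1)"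
    using s1 s2 n5 by (simp add: numeral_2_eq_2)
  then show ?thesis using D k by (auto simp: Lambda1_def)
qed

lemma prod_r0:
  assumes n5: "n \<ge> 5"
  shows "(\<Prod>t\<in>{2..n}. if r0 n t then h t else 1) = (h (n - 1) :: real)"
proof -
  have "(\<Prod>t\<in>{2..n}. if r0 n t then h t else 1) = (\<Prod>t\<in>{2..n}. if t = n - 1 then h t else 1)"
    by (rule prod.cong) (auto simp: r0_def)
  also have "\<dots> = h (n - 1)" using n5 by simp
  finally show ?thesis .
qed

lemma generic:
  fixes M :: "(nat \<Rightarrow> bool) pmf" and g :: "nat \<Rightarrow> real"
  assumes n5: "n \<ge> 5" and K: "K > 0"
    and pm: "\<And>r. r \<in> Delta n \<Longrightarrow> pmf M r = K * (\<Prod>t\<in>{2..n}. if r t then g t else 1)"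
    and gpos: "\<And>t. t \<in> {3..n-1} \<Longrightarrow> 0 < g t"
    and gstrict: "\<And>x y. 3 \<le> x \<Longrightarrow> x < y \<Longrightarrow> y \<le> n - 1 \<Longrightarrow> g y < g x"
  shows "measure_pmf.prob M (Lambda2 n) > measure_pmf.prob M (Lambda1 n)"
proof -
  have gmono: "\<And>x y. 3 \<le> x \<Longrightarrow> x \<le> y \<Longrightarrow> y \<le> n - 1 \<Longrightarrow> g y \<le> g x"
    using gstrict by (metis order.order_iff_strict order_refl)
  have pr: "pmf M (rho n r) = K * (\<Prod>t\<in>{2..n}. if r t then g (n + 2 - t) else 1)" if D: "r \<in> Delta n" for r
    using pm[OF rho_Delta[OF D]] prod_rho[OF D, of g] by simp
  have le: "pmf M r \<le> pmf M (rho n r)" if L: "r \<in> Lambda1 n" for r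
  proof -
    have D: "r \<in> Delta n" using Lambda1_D[OF L] .
    have "(\<Prod>t\<in>{2..n}. if r t then g t else 1) \<le> (\<Prod>t\<in>{2..n}. if r t then g (n + 2 - t) else 1)"
      by (rule compare[OF L]) (use gpos gmono in \<open>auto simp: less_imp_le\<close>)
    then show ?thesis using pm[OF D] pr[OF D] K by simp
  qed
  have D0: "r0 n \<in> Delta n" using r0_Delta[OF n5] .
  have lt0: "pmf M (r0 n) < pmf M (rho n (r0 n))"
  proof -
    have a: "pmf M (r0 n) = K * g (n - 1)" using pm[OF D0] prod_r0[OF n5, of g] by simp
    have b: "pmf M (rho n (r0 n)) = K * g 3"
      using pr[OF D0] prod_r0[OF n5, of "\<lambda>t. g (n + 2 - t)"] n5 by (simp add: numeral_3_eq_3)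
    have "g (n - 1) < g 3" using gstrict[of 3 "n - 1"] n5 by simp
    then show ?thesis using a b K by simp
  qed
  have "0 < (\<Sum>r\<in>Lambda1 n. pmf M (rho n r) - pmf M r)"
    by (rule sum_pos2[OF finite_Lambda1 r0_Lambda1[OF n5]]) (use lt0 le in auto)
  also have "\<dots> = measure_pmf.prob M (Lambda2 n) - measure_pmf.prob M (Lambda1 n)"
    by (simp add: prob_Lambda2 sum_subtractf measure_measure_pmf_finite[OF finite_Lambda1])
  finally show ?thesis by simp
qed



definition pp :: "(nat \<Rightarrow> real) \<Rightarrow> nat \<Rightarrow> real" where
  "pp p i = (if i = 2 then 1 else p i)"

definition fY :: "(nat \<Rightarrow> real) \<Rightarrow> nat \<Rightarrow> real" where
  "fY p t = (1 - p t) / (p t * pp p (t - 1))"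

lemma Y_pmf:
  assumes n5: "n \<ge> 5" and p: "\<forall>i\<in>{3..n}. 0 < p i \<and> p i < 1" and D: "r \<in> Delta n"
  shows "pmf (Ylaw p n) r = ((\<Prod>i\<in>{3..n}. p i) / p n) * (\<Prod>t\<in>{2..n}. if r t then fY p t else 1)"
proof -
  have p01: "\<forall>i\<in>{3..n - 2 + 2}. 0 \<le> p i \<and> p i \<le> 1"
  proof
    fix i assume "i \<in> {3..n - 2 + 2}"
    then have "i \<in> {3..n}" using n5 by auto
    then show "0 \<le> p i \<and> p i \<le> 1" using p by (auto intro: less_imp_le)
  qed
  have nn: "n - 2 + 2 = n" using n5 by simp
  have cond: "(\<forall>i. r i \<longrightarrow> i \<in> {1..n}) \<and> r 1 \<and> \<not> r 2"
    using Delta_D(1,3)[OF D] Delta_2[OF D] by auto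
  define A where "A = (\<lambda>i. if r i then (1 - p i) / p i else 1)"
  define B where "B = (\<lambda>i. if i = n \<or> r (i + 1) then 1 / p i else 1)"
  have Y0: "pmf (Ylaw p n) r = (\<Prod>i\<in>{3..n}. tr (p i) (if i = n then True else r (i+1)) (r i))"
    unfolding Ylaw_def using ychain_pmf[OF p01, of True r] cond by (simp only: nn) simp
  have pw: "tr (p i) (if i = n then True else r (i+1)) (r i) = p i * A i * B i" if i: "i \<in> {3..n}" for i
  proof -
    have pi: "0 < p i" "p i < 1" using p i by auto
    show ?thesis
    proof (cases "r i")
      case True
      then have "i \<noteq> n" using Delta_D(2)[OF D] by auto
      then have "\<not> r (i + 1)" using Delta_D(4)[OF D, of "i + 1"] True i by auto
      then show ?thesis using True pi \<open>i \<noteq> n\<close> by (simp add: tr_def A_def B_def)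
    next
      case False
      then show ?thesis using pi by (auto simp: tr_def A_def B_def)
    qed
  qed
  have Y1: "pmf (Ylaw p n) r = (\<Prod>i\<in>{3..n}. p i) * (\<Prod>i\<in>{3..n}. A i) * (\<Prod>i\<in>{3..n}. B i)"
    unfolding Y0 using pw by (simp add: prod.distrib)
  have PA: "(\<Prod>i\<in>{3..n}. A i) = (\<Prod>t\<in>{2..n}. if r t then (1 - p t) / p t else 1)"
  proof -
    have "{2..n} = insert 2 {3..n}" using n5 by auto
    then show ?thesis using Delta_2[OF D] by (simp add: A_def)
  qed
  have PB1: "(\<Prod>i\<in>{3..n}. B i) = (1 / p n) * (\<Prod>i\<in>{3..n-1}. if r (i + 1) then 1 / p i else 1)"
  proof -
    have e: "{3..n} = insert n {3..n-1}" using n5 by auto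
    have "(\<Prod>i\<in>{3..n-1}. B i) = (\<Prod>i\<in>{3..n-1}. if r (i + 1) then 1 / p i else 1)"
      by (rule prod.cong) (auto simp: B_def)
    moreover have nin: "n \<notin> {3..n-1}" using n5 by auto
    moreover have "B n = 1 / p n" by (simp add: B_def)
    ultimately show ?thesis unfolding e prod.insert[OF finite_atLeastAtMost nin] by simp
  qed
  have PB2: "(\<Prod>i\<in>{3..n-1}. if r (i + 1) then 1 / p i else 1) = (\<Prod>t\<in>{4..n}. if r t then 1 / pp p (t - 1) else 1)"
    by (rule prod.reindex_bij_witness[where j = "\<lambda>i. i + 1" and i = "\<lambda>t. t - 1"]) (auto simp: pp_def)
  have PB3: "(\<Prod>t\<in>{2..n}. if r t then 1 / pp p (t - 1) else 1) = (\<Prod>t\<in>{4..n}. if r t then 1 / pp p (t - 1) else 1)"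
  proof -
    have "{2..n} = insert 2 (insert 3 {4..n})" using n5 by auto
    then show ?thesis using Delta_2[OF D] by (simp add: pp_def)
  qed
  have comb: "(\<Prod>t\<in>{2..n}. if r t then (1 - p t) / p t else 1) * (\<Prod>t\<in>{2..n}. if r t then 1 / pp p (t - 1) else 1)
      = (\<Prod>t\<in>{2..n}. if r t then fY p t else 1)"
    unfolding prod.distrib[symmetric] by (rule prod.cong) (auto simp: fY_def)
  show ?thesis
    unfolding Y1 PA PB1 PB2 PB3[symmetric] comb[symmetric] by simp
qed

lemma fY_step:
  assumes p: "\<forall>i\<in>{3..n}. 0 < p i \<and> p i < 1" and i: "i \<in> {4..n-1}"
    and H: "p i * (1 - p (i - 1)) / ((if i - 2 = 2 then 1 else p (i - 2)) * (1 - p i)) > 1"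
  shows "fY p i < fY p (i - 1)"
proof -
  define a where "a = p i"
  define b where "b = p (i - 1)"
  define c where "c = (if i - 2 = 2 then 1 else p (i - 2))"
  have a: "0 < a" "a < 1" using p i by (auto simp: a_def)
  have "i - 1 \<in> {3..n}" using i by auto
  then have b: "0 < b" "b < 1" using p by (auto simp: b_def)
  have "i - 2 \<noteq> 2 \<Longrightarrow> i - 2 \<in> {3..n}" using i by auto
  then have c: "0 < c" using p by (auto simp: c_def)
  have "i - 1 \<noteq> 2" using i by auto
  then have fi: "fY p i = (1 - a) / (a * b)" by (simp add: fY_def pp_def a_def b_def)
  have fi1: "fY p (i - 1) = (1 - b) / (b * c)" using i
    by (simp add: fY_def pp_def b_def c_def diff_diff_add numeral_2_eq_2 numeral_3_eq_3)
  have H': "a * (1 - b) / (c * (1 - a)) > 1" using H by (simp add: a_def b_def c_def)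
  have den: "c * (1 - a) > 0" using a c by simp
  have "c * (1 - a) < a * (1 - b)" using H' den by (simp add: less_divide_eq)
  then have "c * (1 - a) * b < a * (1 - b) * b" using b by simp
  then have "(1 - a) * (b * c) < (1 - b) * (a * b)" by (simp add: algebra_simps)
  then have "(1 - a) / (a * b) < (1 - b) / (b * c)" using a b c by (simp add: frac_less_eq field_simps)
  then show ?thesis using fi fi1 by simp
qed



lemma partA:
  assumes n5: "n \<ge> 5" and p: "\<forall>i\<in>{3..n}. 0 < p i \<and> p i < 1"
    and H: "\<forall>i\<in>{4..n-1}. p i * (1 - p (i - 1)) / ((if i - 2 = 2 then 1 else p (i - 2)) * (1 - p i)) > 1"
  shows "measure_pmf.prob (Ylaw p n) (Lambda2 n) > measure_pmf.prob (Ylaw p n) (Lambda1 n)"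
proof (rule generic[OF n5, where K = "(\<Prod>i\<in>{3..n}. p i) / p n" and g = "fY p"])
  show "0 < (\<Prod>i\<in>{3..n}. p i) / p n"
    using p n5 by (auto intro!: divide_pos_pos prod_pos)
  show "\<And>r. r \<in> Delta n \<Longrightarrow> pmf (Ylaw p n) r = (\<Prod>i\<in>{3..n}. p i) / p n * (\<Prod>t\<in>{2..n}. if r t then fY p t else 1)"
    using Y_pmf[OF n5 p] by simp
  show "\<And>t. t \<in> {3..n-1} \<Longrightarrow> 0 < fY p t"
  proof -
    fix t assume t: "t \<in> {3..n-1}"
    have pt: "0 < p t" "p t < 1" using p t by auto
    have "t - 1 \<noteq> 2 \<Longrightarrow> t - 1 \<in> {3..n}" using t by auto
    then have "0 < pp p (t - 1)" using p by (auto simp: pp_def)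
    then show "0 < fY p t" using pt by (simp add: fY_def)
  qed
  have step: "fY p i < fY p (i - 1)" if "i \<in> {4..n-1}" for i
    using fY_step[OF p that] H that by blast
  show "\<And>x y. 3 \<le> x \<Longrightarrow> x < y \<Longrightarrow> y \<le> n - 1 \<Longrightarrow> fY p y < fY p x"
  proof -
    fix x y :: nat assume x: "3 \<le> x" and xy: "x < y" and y: "y \<le> n - 1"
    have "Suc x \<le> y" using xy by simp
    then show "fY p y < fY p x" using y
    proof (induction y rule: dec_induct)
      case base
      then show ?case using step[of "Suc x"] x by simp
    next
      case (step m)
      have "fY p (Suc m) < fY p m" using step.prems step.hyps x \<open>\<And>i. i \<in> {4..n-1} \<Longrightarrow> fY p i < fY p (i - 1)\<close>[of "Suc m"] by simp
      then show ?case using step by simp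
    qed
  qed
qed

definition Cxi :: "real \<Rightarrow> nat \<Rightarrow> real" where
  "Cxi \<theta> n = (\<Prod>i\<in>{2..n}. 1 - \<theta> / (\<theta> + real i - 1))"

lemma Cxi_pos: "\<theta> > 0 \<Longrightarrow> Cxi \<theta> n > 0"
  unfolding Cxi_def
proof (rule prod_pos)
  fix i assume t: "\<theta> > 0" and i: "i \<in> {2..n}"
  have "real i \<ge> 2" using i by auto
  then have "\<theta> / (\<theta> + real i - 1) < 1" using t by (simp add: divide_less_eq)
  then show "0 < 1 - \<theta> / (\<theta> + real i - 1)" by simp
qed

lemma xi_pmf:
  assumes t: "\<theta> > 0" and D: "r \<in> Delta n"
  shows "pmf (xilaw \<theta> n) r = Cxi \<theta> n * (\<Prod>t\<in>{2..n}. if r t then \<theta> / (real t - 1) else 1)"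
proof -
  have n2: "n \<ge> 2" using Delta_n[OF D] .
  have "pmf (xilaw \<theta> n) r = (\<Prod>i\<in>{1..n}. pmf (bernoulli_pmf (\<theta> / (\<theta> + real i - 1))) (r i))"
    unfolding xilaw_def by (rule pmf_Pi') (use Delta_D(1)[OF D] in auto)
  also have "\<dots> = (\<Prod>i\<in>{1..n}. if r i then \<theta> / (\<theta> + real i - 1) else 1 - \<theta> / (\<theta> + real i - 1))"
  proof (rule prod.cong)
    fix i assume i: "i \<in> {1..n}"
    have "real i \<ge> 1" using i by auto
    then have "0 \<le> \<theta> / (\<theta> + real i - 1)" "\<theta> / (\<theta> + real i - 1) \<le> 1" using t by (auto simp: divide_le_eq)
    then show "pmf (bernoulli_pmf (\<theta> / (\<theta> + real i - 1))) (r i) =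
      (if r i then \<theta> / (\<theta> + real i - 1) else 1 - \<theta> / (\<theta> + real i - 1))" by simp
  qed simp
  also have "\<dots> = (\<Prod>i\<in>{2..n}. if r i then \<theta> / (\<theta> + real i - 1) else 1 - \<theta> / (\<theta> + real i - 1))"
  proof -
    have "{1..n} = insert 1 {2..n}" using n2 by auto
    then show ?thesis using Delta_D(3)[OF D] t by simp
  qed
  also have "\<dots> = (\<Prod>i\<in>{2..n}. (1 - \<theta> / (\<theta> + real i - 1)) * (if r i then \<theta> / (real i - 1) else 1))"
  proof (rule prod.cong)
    fix i assume i: "i \<in> {2..n}"
    have ri: "real i \<ge> 2" using i by auto
    then have ne: "\<theta> + real i - 1 \<noteq> 0" "real i - 1 \<noteq> 0" using t by auto
    define a where "a = real i - 1"
    have a: "a > 0" "\<theta> + real i - 1 = \<theta> + a" using ri by (auto simp: a_def)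
    have "1 - \<theta> / (\<theta> + a) = a / (\<theta> + a)" using a t by (simp add: field_simps)
    then have "(1 - \<theta> / (\<theta> + a)) * (\<theta> / a) = \<theta> / (\<theta> + a)" using a by simp
    then have "(1 - \<theta> / (\<theta> + real i - 1)) * (\<theta> / (real i - 1)) = \<theta> / (\<theta> + real i - 1)"
      by (simp only: a(2) a_def)
    then show "(if r i then \<theta> / (\<theta> + real i - 1) else 1 - \<theta> / (\<theta> + real i - 1)) =
      (1 - \<theta> / (\<theta> + real i - 1)) * (if r i then \<theta> / (real i - 1) else 1)" by simp
  qed simp
  also have "\<dots> = Cxi \<theta> n * (\<Prod>t\<in>{2..n}. if r t then \<theta> / (real t - 1) else 1)"
    by (simp add: Cxi_def prod.distrib)
  finally show ?thesis .
qed

lemma eta_pmf: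
  assumes n5: "n \<ge> 5" and t: "\<theta> > 0"
  shows "\<exists>K>0. \<forall>r\<in>Delta n. pmf (etalaw \<theta> n) r = K * (\<Prod>t\<in>{2..n}. if r t then \<theta> / (real t - 1) else 1)"
proof -
  let ?M = "xilaw \<theta> n"
  have D0: "r0 n \<in> Delta n" using r0_Delta[OF n5] .
  have "pmf ?M (r0 n) = Cxi \<theta> n * (\<theta> / (real (n - 1) - 1))"
    using xi_pmf[OF t D0] prod_r0[OF n5, of "\<lambda>t. \<theta> / (real t - 1)"] by simp
  moreover have "real (n - 1) - 1 > 0" using n5 by auto
  ultimately have p0: "pmf ?M (r0 n) > 0" using Cxi_pos[OF t] t by simp
  have "r0 n \<in> set_pmf ?M" using p0 by (simp add: set_pmf_iff)
  then have ne: "set_pmf ?M \<inter> Delta n \<noteq> {}" using D0 by blast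
  have P: "measure_pmf.prob ?M (Delta n) > 0"
  proof -
    have "pmf ?M (r0 n) \<le> sum (pmf ?M) (Delta n)"
      by (rule member_le_sum[OF D0]) (auto simp: finite_Delta)
    then show ?thesis using p0 by (simp add: measure_measure_pmf_finite[OF finite_Delta])
  qed
  show ?thesis
  proof (intro exI[of _ "Cxi \<theta> n / measure_pmf.prob ?M (Delta n)"] conjI ballI)
    show "0 < Cxi \<theta> n / measure_pmf.prob ?M (Delta n)" using Cxi_pos[OF t] P by simp
    fix r assume D: "r \<in> Delta n"
    show "pmf (etalaw \<theta> n) r = Cxi \<theta> n / measure_pmf.prob ?M (Delta n) * (\<Prod>t\<in>{2..n}. if r t then \<theta> / (real t - 1) else 1)"
      unfolding etalaw_def pmf_cond[OF ne] using D xi_pmf[OF t D] by simp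
  qed
qed

lemma partB:
  assumes n5: "n \<ge> 5" and t: "\<theta> > 0"
  shows "measure_pmf.prob (etalaw \<theta> n) (Lambda2 n) > measure_pmf.prob (etalaw \<theta> n) (Lambda1 n) \<and>
      measure_pmf.prob (etalaw \<theta> n) (Lambda2 n) =
        (\<Sum>r\<in>Lambda1 n. (\<Prod>i=1..ones n r - 1.
            (real (sigma n r i) - 1) / (real (n + 1) - real (sigma n r i))) * pmf (etalaw \<theta> n) r)"
proof -
  define g where "g = (\<lambda>t::nat. \<theta> / (real t - 1))"
  obtain K where K: "K > 0" and pm: "\<And>r. r \<in> Delta n \<Longrightarrow> pmf (etalaw \<theta> n) r = K * (\<Prod>t\<in>{2..n}. if r t then g t else 1)"
    using eta_pmf[OF n5 t] unfolding g_def by blast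
  have A: "measure_pmf.prob (etalaw \<theta> n) (Lambda2 n) > measure_pmf.prob (etalaw \<theta> n) (Lambda1 n)"
  proof (rule generic[OF n5 K pm])
    show "\<And>t. t \<in> {3..n - 1} \<Longrightarrow> 0 < g t" using t by (auto simp: g_def)
    show "\<And>x y. 3 \<le> x \<Longrightarrow> x < y \<Longrightarrow> y \<le> n - 1 \<Longrightarrow> g y < g x"
    proof -
      fix x y :: nat assume "3 \<le> x" "x < y" "y \<le> n - 1"
      then have "real x - 1 > 0" "real x - 1 < real y - 1" by auto
      then show "g y < g x" unfolding g_def using t by (simp add: divide_strict_left_mono)
    qed
  qed
  define h where "h = (\<lambda>t::nat. (real t - 1) / (real (n + 1) - real t))"
  have pw: "pmf (etalaw \<theta> n) (rho n r) = (\<Prod>i=1..ones n r - 1. h (sigma n r i)) * pmf (etalaw \<theta> n) r"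
    if L: "r \<in> Lambda1 n" for r
  proof -
    have D: "r \<in> Delta n" using Lambda1_D[OF L] .
    have "pmf (etalaw \<theta> n) (rho n r) = K * (\<Prod>t\<in>{2..n}. if r t then g (n + 2 - t) else 1)"
      using pm[OF rho_Delta[OF D]] prod_rho[OF D, of g] by simp
    also have "(\<Prod>t\<in>{2..n}. if r t then g (n + 2 - t) else 1) = (\<Prod>t\<in>{2..n}. if r t then h t * g t else 1)"
    proof (rule prod.cong)
      fix x assume x: "x \<in> {2..n}"
      have e: "real (n + 2 - x) = real n + 2 - real x" using x by (simp add: of_nat_diff)
      have ne: "real x - 1 \<noteq> 0" using x by auto
      have c: "real n + 2 - real x - 1 = real (n + 1) - real x" by simp
      have "(real x - 1) / (real (n + 1) - real x) * (\<theta> / (real x - 1)) = \<theta> / (real (n + 1) - real x)"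
        using ne by simp
      then have "g (n + 2 - x) = h x * g x" unfolding g_def h_def e c by simp
      then show "(if r x then g (n + 2 - x) else 1) = (if r x then h x * g x else 1)" by simp
    qed simp
    also have "\<dots> = (\<Prod>t\<in>{2..n}. if r t then h t else 1) * (\<Prod>t\<in>{2..n}. if r t then g t else 1)"
      unfolding prod.distrib[symmetric] by (rule prod.cong) auto
    finally show ?thesis using pm[OF D] prod_sigma[OF D, of h] by simp
  qed
  have B: "measure_pmf.prob (etalaw \<theta> n) (Lambda2 n) =
        (\<Sum>r\<in>Lambda1 n. (\<Prod>i=1..ones n r - 1. h (sigma n r i)) * pmf (etalaw \<theta> n) r)"
    unfolding prob_Lambda2 by (rule sum.cong) (auto simp: pw)
  show ?thesis using A B by (simp add: h_def)
qed

theorem mainTheorem8: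
  fixes n :: nat
  assumes "n \<ge> 5"
  shows
   "(\<forall>p :: nat \<Rightarrow> real.
      (\<forall>i\<in>{3..n}. 0 < p i \<and> p i < 1) \<longrightarrow>
      (\<forall>i\<in>{4..n-1}. p i * (1 - p (i - 1)) / ((if i - 2 = 2 then 1 else p (i - 2)) * (1 - p i)) > 1) \<longrightarrow>
      measure_pmf.prob (Ylaw p n) (Lambda2 n) > measure_pmf.prob (Ylaw p n) (Lambda1 n))
    \<and>
    (\<forall>\<theta> :: real. \<theta> > 0 \<longrightarrow>
      measure_pmf.prob (etalaw \<theta> n) (Lambda2 n) > measure_pmf.prob (etalaw \<theta> n) (Lambda1 n) \<and>
      measure_pmf.prob (etalaw \<theta> n) (Lambda2 n) =
        (\<Sum>r\<in>Lambda1 n. (\<Prod>i=1..ones n r - 1.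
            (real (sigma n r i) - 1) / (real (n + 1) - real (sigma n r i))) * pmf (etalaw \<theta> n) r))"
  proof (intro conjI allI impI)
  fix p :: "nat \<Rightarrow> real"
  assume "\<forall>i\<in>{3..n}. 0 < p i \<and> p i < 1"
    and "\<forall>i\<in>{4..n-1}. p i * (1 - p (i - 1)) / ((if i - 2 = 2 then 1 else p (i - 2)) * (1 - p i)) > 1"
  then show "measure_pmf.prob (Ylaw p n) (Lambda2 n) > measure_pmf.prob (Ylaw p n) (Lambda1 n)"
    using partA[OF assms] by blast
next
  fix \<theta> :: real assume "\<theta> > 0"
  then show "measure_pmf.prob (etalaw \<theta> n) (Lambda2 n) > measure_pmf.prob (etalaw \<theta> n) (Lambda1 n)"
    using partB[OF assms] by blast
next
  fix \<theta> :: real assume "\<theta> > 0"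
  then show "measure_pmf.prob (etalaw \<theta> n) (Lambda2 n) =
        (\<Sum>r\<in>Lambda1 n. (\<Prod>i=1..ones n r - 1.
            (real (sigma n r i) - 1) / (real (n + 1) - real (sigma n r i))) * pmf (etalaw \<theta> n) r)"
    using partB[OF assms] by blast
qed

end
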